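(* Let $\mathcal F \subset \binom{[n]}{k}$ be initial and let $q$ be a positive integer with $q < n$. Let $P \subset R \subset [q]$ with $|R| \leq k$. For $S \subset [q]$ write $\mathcal F_S = \{F \setminus S : F \in \mathcal F,\ F \cap [q] = S\}$ (a family of $(k-|S|)$-subsets of $[q+1,n]$). Then $$\frac{|\mathcal F_P|}{\binom{n-q}{k-|P|}} \leq \frac{|\mathcal F_R|}{\binom{n-q}{k-|R|}}.$$
   Context: For $k$-sets $A=\{x_1<\dots<x_k\}$, $B=\{y_1<\dots<y_k\}$, $A\prec B$ means $x_i\le y_i$ for all $i$. A family $\mathcal F\subset\binom{[n]}{k}$ is initial if $A\prec B\in\mathcal F$ implies $A\in\mathcal F$. $[q+1,n]=\{q+1,\dots,n\}$. *)

theory Defs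
  imports Complex_Main
begin

definition ksets :: "nat \<Rightarrow> nat \<Rightarrow> nat set set" where
  "ksets n k = {A. A \<subseteq> {1..n} \<and> card A = k}"

definition shift_prec :: "nat set \<Rightarrow> nat set \<Rightarrow> bool" where
  "shift_prec A B \<longleftrightarrow> finite A \<and> finite B \<and> card A = card B \<and>
     (\<forall>i < card A. sorted_list_of_set A ! i \<le> sorted_list_of_set B ! i)"

definition initial :: "nat \<Rightarrow> nat \<Rightarrow> nat set set \<Rightarrow> bool" where
  "initial n k F \<longleftrightarrow> F \<subseteq> ksets n k \<and>
     (\<forall>A \<in> ksets n k. \<forall>B \<in> F. shift_prec A B \<longrightarrow> A \<in> F)"

definition link :: "nat set set \<Rightarrow> nat \<Rightarrow> nat set \<Rightarrow> nat set set" where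
  "link F q S = {G - S | G. G \<in> F \<and> G \<inter> {1..q} = S}"

end

theory Submission
  imports Defs
begin
lemma shift_lemma:
  assumes fin: "finite B" and inj: "inj_on f B" and img: "f ` B = A" and le: "\<forall>b\<in>B. f b \<le> b"
  shows "shift_prec A B"
proof -
  have finA: "finite A" using fin img by blast
  have cardAB: "card A = card B" using card_image[OF inj] img by simp
  define xs where "xs = sorted_list_of_set B"
  define ys where "ys = sorted_list_of_set A"
  have lxs: "length xs = card B" "sorted xs" "distinct xs" "set xs = B" using fin by (auto simp: xs_def)
  have lys: "length ys = card A" "sorted ys" "distinct ys" "set ys = A" using finA by (auto simp: ys_def)
  have "ys ! i \<le> xs ! i" if i: "i < card A" for i
  proof (rule ccontr)
    assume ne: "\<not> ys ! i \<le> xs ! i"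
    define T where "T = set (take (Suc i) xs)"
    have cT: "card T = Suc i" using lxs i cardAB unfolding T_def
      by (simp add: distinct_card)
    have Tle: "\<forall>t\<in>T. t \<le> xs ! i"
    proof
      fix t assume "t \<in> T"
      then obtain j where j: "j < length (take (Suc i) xs)" "t = take (Suc i) xs ! j"
        unfolding T_def by (auto simp: in_set_conv_nth)
      then have "j \<le> i" "t = xs ! j" by auto
      then show "t \<le> xs ! i" using lxs i cardAB sorted_nth_mono[of xs j i] by simp
    qed
    have TB: "T \<subseteq> B" unfolding T_def using lxs by (meson set_take_subset)
    have "f ` T \<subseteq> set (take i ys)"
    proof
      fix a assume "a \<in> f ` T"
      then obtain t where t: "t \<in> T" "a = f t" by auto
      have aA: "a \<in> A" using t TB img by auto
      have alt: "a < ys ! i" using t Tle le TB ne by fastforce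
      obtain j where j: "j < length ys" "a = ys ! j" using aA lys by (metis in_set_conv_nth)
      have "j < i"
      proof (rule ccontr)
        assume "\<not> j < i"
        then have "ys ! i \<le> ys ! j" using lys j sorted_nth_mono[of ys i j] by simp
        then show False using alt j by simp
      qed
      then show "a \<in> set (take i ys)" using j by (auto simp: in_set_conv_nth)
    qed
    then have "card (f ` T) \<le> card (set (take i ys))" by (simp add: card_mono)
    also have "\<dots> \<le> i" using card_length[of "take i ys"] by simp
    finally have "card (f ` T) \<le> i" .
    moreover have "card (f ` T) = Suc i" using cT card_image inj_on_subset[OF inj TB] by metis
    ultimately show False by simp
  qed
  then show ?thesis unfolding shift_prec_def using fin finA cardAB xs_def ys_def by auto
qed

lemma cfilt: "finite A \<Longrightarrow> card {x\<in>A. P x} = (\<Sum>x\<in>A. if P x then 1 else 0)"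
  by (simp add: sum.inter_filter[symmetric])

lemma lym_local:
  fixes U :: "'a set" and G D :: "'a set set"
  assumes finU: "finite U" and GU: "\<forall>H\<in>G. H \<subseteq> U \<and> card H = j"
    and DU: "\<forall>X\<in>D. X \<subseteq> U \<and> card X = j - 1" and j1: "1 \<le> j"
    and sh: "\<forall>H\<in>G. \<forall>y\<in>H. H - {y} \<in> D"
  shows "card G * j \<le> card D * (card U - (j - 1))"
proof -
  have finG: "finite G" using GU finU by (intro finite_subset[of G "Pow U"]) auto
  have finD: "finite D" using DU finU by (intro finite_subset[of D "Pow U"]) auto
  have "card G * j = (\<Sum>H\<in>G. j)" by simp
  also have "\<dots> \<le> (\<Sum>H\<in>G. card {X\<in>D. X \<subseteq> H})"
  proof (rule sum_mono)
    fix H assume H: "H \<in> G"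
    have inj: "inj_on (\<lambda>y. H - {y}) H" by (auto simp: inj_on_def)
    have sub: "(\<lambda>y. H - {y}) ` H \<subseteq> {X\<in>D. X \<subseteq> H}" using sh H by auto
    have "j = card ((\<lambda>y. H - {y}) ` H)" using card_image[OF inj] GU H by simp
    also have "\<dots> \<le> card {X\<in>D. X \<subseteq> H}" using sub finD by (intro card_mono) auto
    finally show "j \<le> card {X\<in>D. X \<subseteq> H}" .
  qed
  also have "\<dots> = (\<Sum>H\<in>G. \<Sum>X\<in>D. if X \<subseteq> H then 1 else 0)"
    using finD by (intro sum.cong refl) (rule cfilt)
  also have "\<dots> = (\<Sum>X\<in>D. \<Sum>H\<in>G. if X \<subseteq> H then 1 else 0)" by (rule sum.swap)
  also have "\<dots> = (\<Sum>X\<in>D. card {H\<in>G. X \<subseteq> H})"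
    using finG by (intro sum.cong refl) (rule cfilt[symmetric])
  also have "\<dots> \<le> (\<Sum>X\<in>D. card U - (j - 1))"
  proof (rule sum_mono)
    fix X assume X: "X \<in> D"
    have one: "\<exists>u. H - X = {u}" if "H \<in> G" "X \<subseteq> H" for H
    proof -
      have fH: "finite H" using GU that finU finite_subset by blast
      have "card (H - X) = card H - card X" using card_Diff_subset[OF finite_subset[OF that(2) fH] that(2)] .
      then have "card (H - X) = 1" using GU DU X that j1 by simp
      then show ?thesis by (meson card_1_singletonE)
    qed
    define g where "g H = the_elem (H - X)" for H
    have gH: "H - X = {g H}" if "H \<in> G" "X \<subseteq> H" for H
      using one[OF that] unfolding g_def by (metis the_elem_eq)
    have "inj_on g {H\<in>G. X \<subseteq> H}"
    proof (rule inj_onI)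
      fix H1 H2 assume a: "H1 \<in> {H\<in>G. X \<subseteq> H}" "H2 \<in> {H\<in>G. X \<subseteq> H}" "g H1 = g H2"
      have e: "H = X \<union> {g H}" if "H \<in> G" "X \<subseteq> H" for H using gH[OF that] that by blast
      show "H1 = H2" using e[of H1] e[of H2] a by auto
    qed
    moreover have "g ` {H\<in>G. X \<subseteq> H} \<subseteq> U - X" using gH GU by blast
    ultimately have "card {H\<in>G. X \<subseteq> H} \<le> card (U - X)"
      using finU by (meson card_inj_on_le finite_Diff)
    also have "\<dots> = card U - (j - 1)" using DU X finU card_Diff_subset[of X U] finite_subset[of X U] by simp
    finally show "card {H\<in>G. X \<subseteq> H} \<le> card U - (j - 1)" .
  qed
  also have "\<dots> = card D * (card U - (j - 1))" by simp
  finally show ?thesis .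
qed

lemma choose_id: "(m choose Suc i) * Suc i = (m choose i) * (m - i)"
  by (metis binomial_absorb_comp binomial_absorption mult.commute)

lemma link_props:
  assumes ini: "initial n k F" and S: "S \<subseteq> {1..q}" and H: "H \<in> link F q S"
  shows "H \<subseteq> {Suc q..n} \<and> card H = k - card S"
proof -
  obtain G where G: "H = G - S" "G \<in> F" "G \<inter> {1..q} = S" using H unfolding link_def by blast
  have Gk: "G \<subseteq> {1..n}" "card G = k" using G ini unfolding initial_def ksets_def by auto
  have SG: "S \<subseteq> G" using G by auto
  have "card H = k - card S" using G Gk SG card_Diff_subset[of S G] finite_subset[of G "{1..n}"]
    by (metis finite_atLeastAtMost finite_subset)
  moreover have "H \<subseteq> {Suc q..n}" using G Gk by auto
  ultimately show ?thesis by simp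
qed

lemma step_mem:
  assumes ini: "initial n k F" and P: "P \<subseteq> {1..q}" and x: "x \<in> {1..q}" "x \<notin> P"
    and qn: "q < n" and H: "H \<in> link F q P" and y: "y \<in> H"
  shows "H - {y} \<in> link F q (insert x P)"
proof -
  obtain G where G: "H = G - P" "G \<in> F" "G \<inter> {1..q} = P" using H unfolding link_def by blast
  have Gk: "G \<subseteq> {1..n}" "card G = k" using G ini unfolding initial_def ksets_def by auto
  have finG: "finite G" using Gk finite_subset by blast
  have yG: "y \<in> G" "y \<notin> P" using G y by auto
  have yq: "q < y" using yG G Gk by auto
  have xG: "x \<notin> G" using x G by auto
  define A where "A = insert x (G - {y})"
  define f where "f b = (if b = y then x else b)" for b
  have inj: "inj_on f G" using xG unfolding f_def inj_on_def by auto
  have img: "f ` G = A" using yG unfolding A_def f_def by auto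
  have le: "\<forall>b\<in>G. f b \<le> b" using x yq unfolding f_def by auto
  have sp: "shift_prec A G" by (rule shift_lemma[OF finG inj img le])
  have k0: "0 < k" using yG finG Gk card_gt_0_iff by blast
  have cA: "card A = k" unfolding A_def using finG xG yG Gk k0 by (simp add: card_Diff_singleton)
  have AK: "A \<in> ksets n k" unfolding ksets_def A_def using Gk x qn cA A_def by auto
  have AF: "A \<in> F" using ini AK G(2) sp unfolding initial_def by blast
  have Aq: "A \<inter> {1..q} = insert x P" using G x yq unfolding A_def by auto
  have "A - insert x P = H - {y}" using G xG unfolding A_def by auto
  then show ?thesis using AF Aq unfolding link_def by blast
qed

lemma step_ratio:
  assumes ini: "initial n k F" and P: "P \<subseteq> {1..q}" and x: "x \<in> {1..q}" "x \<notin> P"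
    and qn: "q < n" and Pk: "card P < k"
  shows "real (card (link F q P)) / real ((n - q) choose (k - card P))
         \<le> real (card (link F q (insert x P))) / real ((n - q) choose (k - card (insert x P)))"
proof -
  define j where "j = k - card P"
  define m where "m = n - q"
  define G where "G = link F q P"
  define D where "D = link F q (insert x P)"
  have finP: "finite P" using P finite_subset by blast
  have j1: "1 \<le> j" using Pk j_def by simp
  have cI: "k - card (insert x P) = j - 1" using finP x j_def by simp
  have P2: "insert x P \<subseteq> {1..q}" using P x by auto
  have cU: "card {Suc q..n} = m" using m_def by simp
  have GU: "\<forall>H\<in>G. H \<subseteq> {Suc q..n} \<and> card H = j" using link_props[OF ini P] G_def j_def by blast
  have DU: "\<forall>X\<in>D. X \<subseteq> {Suc q..n} \<and> card X = j - 1" using link_props[OF ini P2] D_def cI by metis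
  have sh: "\<forall>H\<in>G. \<forall>y\<in>H. H - {y} \<in> D" using step_mem[OF ini P x qn] G_def D_def by blast
  have key: "card G * j \<le> card D * (m - (j - 1))"
    using lym_local[OF _ GU DU j1 sh] cU by (simp only: finite_atLeastAtMost simp_thms)
  show ?thesis
  proof (cases "j \<le> m")
    case False
    then have "m choose j = 0" by simp
    then have "real (card (link F q P)) / real ((n - q) choose (k - card P)) = 0"
      using j_def m_def by simp
    moreover have "0 \<le> real (card (link F q (insert x P))) / real ((n - q) choose (k - card (insert x P)))"
      by simp
    ultimately show ?thesis by linarith
  next
    case True
    obtain i where i: "j = Suc i" using j1 by (cases j) auto
    have cid: "(m choose j) * j = (m choose (j - 1)) * (m - (j - 1))" using choose_id[of m i] i by simp
    have p1: "0 < m choose j" using True by simp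
    have p2: "0 < m choose (j - 1)" using True by simp
    have "card G * j * (m choose (j - 1)) \<le> card D * (m - (j - 1)) * (m choose (j - 1))"
      using key by simp
    also have "\<dots> = card D * (m choose j) * j" using cid by (simp add: ac_simps)
    finally have "card G * (m choose (j - 1)) * j \<le> card D * (m choose j) * j" by (simp add: ac_simps)
    then have nat: "card G * (m choose (j - 1)) \<le> card D * (m choose j)" using j1 by simp
    have "real (card G) * real (m choose (j - 1)) \<le> real (card D) * real (m choose j)"
      using nat by (metis of_nat_le_iff of_nat_mult)
    then have "real (card G) / real (m choose j) \<le> real (card D) / real (m choose (j - 1))"
      using p1 p2 by (simp add: divide_simps)
    then show ?thesis using cI j_def m_def G_def D_def by simp
  qed
qed

theorem lemma2p5:
  fixes n k q :: nat and F :: "nat set set" and P R :: "nat set"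
  assumes "initial n k F"
    and "0 < q" and "q < n"
    and "P \<subseteq> R" and "R \<subseteq> {1..q}" and "card R \<le> k"
  shows "real (card (link F q P)) / real ((n - q) choose (k - card P))
         \<le> real (card (link F q R)) / real ((n - q) choose (k - card R))"
  using assms(4)
proof (induct "card (R - P)" arbitrary: P rule: less_induct)
  case (less P)
  have finR: "finite R" using assms(5) finite_subset by blast
  show ?case
  proof (cases "P = R")
    case True then show ?thesis by simp
  next
    case False
    then obtain x where x: "x \<in> R" "x \<notin> P" using less.prems by blast
    have P: "P \<subseteq> {1..q}" using less.prems assms(5) by blast
    have "card P < card R" using less.prems False finR by (simp add: psubset_card_mono)
    then have Pk: "card P < k" using assms(6) by simp
    have st: "real (card (link F q P)) / real ((n - q) choose (k - card P))
         \<le> real (card (link F q (insert x P))) / real ((n - q) choose (k - card (insert x P)))"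
      using step_ratio[OF assms(1) P _ x(2) assms(3) Pk] x assms(5) by blast
    have "card (R - insert x P) < card (R - P)"
    proof -
      have "R - insert x P = (R - P) - {x}" by auto
      moreover have "x \<in> R - P" using x by simp
      ultimately show ?thesis using finR card_Diff1_less[of "R - P" x] by simp
    qed
    moreover have "insert x P \<subseteq> R" using x less.prems by blast
    ultimately have "real (card (link F q (insert x P))) / real ((n - q) choose (k - card (insert x P)))
         \<le> real (card (link F q R)) / real ((n - q) choose (k - card R))"
      using less.hyps by blast
    then show ?thesis using st by linarith
  qed
qed

end
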